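(* The following hold: (1) $\mathsf{SLT}\subsetneq\mathsf{LLT}\subsetneq\mathsf{LLT}_\cup\subseteq\mathsf{LLT}_{\cup\cap}\subsetneq\mathsf{LTT}$ and $\mathsf{SLT}_\cup\subsetneq\mathsf{LLT}_\cup$. (2) $\mathsf{LLT}$ and $\mathsf{LT}$ are incomparable (neither contains the other), and $\mathsf{LLT}_\cup$ and $\mathsf{LT}$ are incomparable. (3) $\mathsf{LTT}$ equals the closure of $\mathsf{LLT}$ under union, intersection and complement.
   Context: Let $\Sigma$ be a finite alphabet. For a word $w$ and $\ell\in\mathbb N_0$, $p_\ell(w)$ (resp. $s_\ell(w)$) is the prefix (resp. suffix) of $w$ of length $\ell$ if $|w|\ge\ell$ and $w$ otherwise; $I_\ell(w)$ is the set of infixes of $w$ of length exactly $\ell$; $|w|_m$ is the number of occurrences of $m$ as an infix of $w$; $\Sigma^{\le\ell}$ is the set of words of length $\le\ell$. The empty word is disregarded in all language comparisons. $\mathsf{SLT}$: $L$ is strictly locally testable if there are $\ell\in\mathbb N_+$, $\pi,\sigma\subseteq\Sigma^{\le\ell}$, $\mu\subseteq\Sigma^\ell$ with $w\in L\iff p_{\ell-1}(w)\in\pi$, $I_\ell(w)\subseteq\mu$, $s_{\ell-1}(w)\in\sigma$. $\mathsf{LT}$: $L$ is locally testable if there is $\ell\in\mathbb N_+$ such that whenever $p_{\ell-1}(w_1)=p_{\ell-1}(w_2)$, $I_\ell(w_1)=I_\ell(w_2)$ and $s_{\ell-1}(w_1)=s_{\ell-1}(w_2)$, then $w_1\in L\iff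 w_2\in L$. $\mathsf{LTT}$: $L$ is locally threshold testable if there are $\theta,\ell\in\mathbb N_+$ such that for all $w_1,w_2$ with $p_{\ell-1}(w_1)=p_{\ell-1}(w_2)$, $s_{\ell-1}(w_1)=s_{\ell-1}(w_2)$, and for every $m\in\Sigma^\ell$ ($|w_i|_m<\theta$ for some $i\in\{1,2\}$ implies $|w_1|_m=|w_2|_m$), we have $w_1\in L\iff w_2\in L$. $\mathsf{LLT}$: for $\ell\in\mathbb N_0$, $\theta\in\mathbb R_{\ge0}$, $\pi,\sigma\subseteq\Sigma^{\le\ell-1}$, $\alpha\colon\Sigma^\ell\to\mathbb R_{\ge0}$, $\mathrm{LLin}_\ell(\pi,\sigma,\alpha,\theta)$ is the set of $w\in\Sigma^+$ with $p_{\ell-1}(w)\in\pi$, $s_{\ell-1}(w)\in\sigma$ and $\sum_{m\in\Sigma^\ell}\alpha(m)|w|_m\le\theta$; $\mathsf{LLT}$ is the class of all such languages (over all finite alphabets). $\mathsf{SLT}_\cup$, $\mathsf{LLT}_\cup$ denote closures under finite union; $\mathsf{LLT}_{\cup\cap}$ the closure of $\mathsf{LLT}$ under finite union and intersection. *)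

theory Defs
  imports Complex_Main
begin

text \<open>Letters are natural numbers; an alphabet is a finite set of letters.
  A language over an alphabet S is a set of nonempty words over S
  (the empty word is disregarded).\<close>

type_synonym word = "nat list"
type_synonym lang = "word set"
type_synonym lclass = "nat set \<Rightarrow> lang \<Rightarrow> bool"

definition nonempty_words :: "nat set \<Rightarrow> lang" where
  "nonempty_words S = {w \<in> lists S. w \<noteq> []}"

definition words_len :: "nat set \<Rightarrow> nat \<Rightarrow> lang" where
  "words_len S l = {w \<in> lists S. length w = l}"

text \<open>Words of length at most k; k is an integer so that negative bounds give the empty set.\<close>
definition words_upto :: "nat set \<Rightarrow> int \<Rightarrow> lang" where
  "words_upto S k = {w \<in> lists S. int (length w) \<le> k}"

definition pref :: "nat \<Rightarrow> word \<Rightarrow> word" where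
  "pref l w = take l w"

definition suf :: "nat \<Rightarrow> word \<Rightarrow> word" where
  "suf l w = drop (length w - l) w"

definition infixes :: "nat \<Rightarrow> word \<Rightarrow> lang" where
  "infixes l w = {take l (drop i w) | i. i + l \<le> length w}"

definition occ :: "word \<Rightarrow> word \<Rightarrow> nat" where
  "occ m w = card {i. i + length m \<le> length w \<and> take (length m) (drop i w) = m}"

definition SLT :: lclass where
  "SLT S L \<longleftrightarrow> L \<subseteq> nonempty_words S \<and>
    (\<exists>l \<ge> 1. \<exists>\<pi> \<sigma> \<mu>. \<pi> \<subseteq> words_upto S (int l) \<and> \<sigma> \<subseteq> words_upto S (int l) \<and>
       \<mu> \<subseteq> words_len S l \<and>
       (\<forall>w \<in> nonempty_words S. w \<in> L \<longleftrightarrow>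
          pref (l - 1) w \<in> \<pi> \<and> infixes l w \<subseteq> \<mu> \<and> suf (l - 1) w \<in> \<sigma>))"

definition LT :: lclass where
  "LT S L \<longleftrightarrow> L \<subseteq> nonempty_words S \<and>
    (\<exists>l \<ge> 1. \<forall>w1 \<in> nonempty_words S. \<forall>w2 \<in> nonempty_words S.
       pref (l - 1) w1 = pref (l - 1) w2 \<and> infixes l w1 = infixes l w2 \<and>
       suf (l - 1) w1 = suf (l - 1) w2 \<longrightarrow> (w1 \<in> L \<longleftrightarrow> w2 \<in> L))"

definition LTT :: lclass where
  "LTT S L \<longleftrightarrow> L \<subseteq> nonempty_words S \<and>
    (\<exists>\<theta> \<ge> 1. \<exists>l \<ge> 1. \<forall>w1 \<in> nonempty_words S. \<forall>w2 \<in> nonempty_words S.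
       pref (l - 1) w1 = pref (l - 1) w2 \<and> suf (l - 1) w1 = suf (l - 1) w2 \<and>
       (\<forall>m \<in> words_len S l. (occ m w1 < \<theta> \<or> occ m w2 < \<theta>) \<longrightarrow> occ m w1 = occ m w2)
       \<longrightarrow> (w1 \<in> L \<longleftrightarrow> w2 \<in> L))"

definition LLin :: "nat set \<Rightarrow> nat \<Rightarrow> lang \<Rightarrow> lang \<Rightarrow> (word \<Rightarrow> real) \<Rightarrow> real \<Rightarrow> lang" where
  "LLin S l \<pi> \<sigma> \<alpha> \<theta> = {w \<in> nonempty_words S. pref (l - 1) w \<in> \<pi> \<and> suf (l - 1) w \<in> \<sigma> \<and>
      (\<Sum>m \<in> words_len S l. \<alpha> m * real (occ m w)) \<le> \<theta>}"

definition LLT :: lclass where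
  "LLT S L \<longleftrightarrow> (\<exists>l \<pi> \<sigma> \<alpha> \<theta>. \<pi> \<subseteq> words_upto S (int l - 1) \<and> \<sigma> \<subseteq> words_upto S (int l - 1) \<and>
      (\<forall>m \<in> words_len S l. \<alpha> m \<ge> 0) \<and> \<theta> \<ge> 0 \<and> L = LLin S l \<pi> \<sigma> \<alpha> \<theta>)"

inductive union_cl :: "lclass \<Rightarrow> lclass" for C :: lclass and S :: "nat set" where
  base: "C S L \<Longrightarrow> union_cl C S L"
| un: "union_cl C S L1 \<Longrightarrow> union_cl C S L2 \<Longrightarrow> union_cl C S (L1 \<union> L2)"

inductive union_inter_cl :: "lclass \<Rightarrow> lclass" for C :: lclass and S :: "nat set" where
  base: "C S L \<Longrightarrow> union_inter_cl C S L"
| un: "union_inter_cl C S L1 \<Longrightarrow> union_inter_cl C S L2 \<Longrightarrow> union_inter_cl C S (L1 \<union> L2)"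
| inter: "union_inter_cl C S L1 \<Longrightarrow> union_inter_cl C S L2 \<Longrightarrow> union_inter_cl C S (L1 \<inter> L2)"

inductive bool_cl :: "lclass \<Rightarrow> lclass" for C :: lclass and S :: "nat set" where
  base: "C S L \<Longrightarrow> bool_cl C S L"
| un: "bool_cl C S L1 \<Longrightarrow> bool_cl C S L2 \<Longrightarrow> bool_cl C S (L1 \<union> L2)"
| inter: "bool_cl C S L1 \<Longrightarrow> bool_cl C S L2 \<Longrightarrow> bool_cl C S (L1 \<inter> L2)"
| compl: "bool_cl C S L \<Longrightarrow> bool_cl C S (nonempty_words S - L)"

definition class_subset :: "lclass \<Rightarrow> lclass \<Rightarrow> bool" where
  "class_subset C D \<longleftrightarrow> (\<forall>S L. finite S \<longrightarrow> C S L \<longrightarrow> D S L)"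

definition strict_subclass :: "lclass \<Rightarrow> lclass \<Rightarrow> bool" where
  "strict_subclass C D \<longleftrightarrow> class_subset C D \<and> \<not> class_subset D C"

definition incomparable :: "lclass \<Rightarrow> lclass \<Rightarrow> bool" where
  "incomparable C D \<longleftrightarrow> \<not> class_subset C D \<and> \<not> class_subset D C"

end

theory Submission
  imports Defs
begin

lemma occ_finite: "finite {i::nat. i + k \<le> n \<and> P i}"
  by (rule finite_subset[of _ "{..n}"]) auto

lemma occ_drop_split:
  assumes "d \<le> length w"
  shows "occ m w = card {i. i < d \<and> i + length m \<le> length w \<and> take (length m) (drop i w) = m}
                   + occ m (drop d w)"
proof -
  let ?l = "length m"
  let ?A = "{i. i < d \<and> i + ?l \<le> length w \<and> take ?l (drop i w) = m}"
  let ?J = "{j. j + ?l \<le> length (drop d w) \<and> take ?l (drop j (drop d w)) = m}"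
  have eq: "{i. i + ?l \<le> length w \<and> take ?l (drop i w) = m} = ?A \<union> (\<lambda>j. j + d) ` ?J"
  proof (rule set_eqI, rule iffI)
    fix i assume i: "i \<in> {i. i + ?l \<le> length w \<and> take ?l (drop i w) = m}"
    show "i \<in> ?A \<union> (\<lambda>j. j + d) ` ?J"
    proof (cases "i < d")
      case True then show ?thesis using i by auto
    next
      case False
      then have "i = (i - d) + d" by simp
      moreover have "i - d \<in> ?J" using i False assms by (auto simp: add.commute)
      ultimately show ?thesis by blast
    qed
  next
    fix i assume "i \<in> ?A \<union> (\<lambda>j. j + d) ` ?J"
    then show "i \<in> {i. i + ?l \<le> length w \<and> take ?l (drop i w) = m}"
      using assms by (auto simp: add.commute)
  qed
  have fJ: "finite ?J" by (rule occ_finite)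
  have fA: "finite ?A" by (rule finite_subset[of _ "{..length w}"]) auto
  have "card (?A \<union> (\<lambda>j. j + d) ` ?J) = card ?A + card ((\<lambda>j. j + d) ` ?J)"
    by (rule card_Un_disjoint) (use fJ fA in auto)
  moreover have "card ((\<lambda>j. j + d) ` ?J) = card ?J" by (rule card_image) (auto simp: inj_on_def)
  ultimately show ?thesis unfolding occ_def eq by simp
qed

lemma occ_append:
  assumes "1 \<le> length m"
  shows "occ m (x @ y) = occ m x + occ m (suf (length m - 1) x @ y)"
proof -
  let ?l = "length m"
  define d where "d = length x - (?l - 1)"
  have d: "d \<le> length (x @ y)" by (simp add: d_def)
  have "drop d (x @ y) = suf (?l - 1) x @ y" by (simp add: d_def suf_def)
  moreover have "{i. i < d \<and> i + ?l \<le> length (x @ y) \<and> take ?l (drop i (x @ y)) = m}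
        = {i. i + ?l \<le> length x \<and> take ?l (drop i x) = m}"
    using assms by (auto simp: d_def)
  ultimately show ?thesis using occ_drop_split[OF d, of m] unfolding occ_def by simp
qed

lemma occ_mono_append: "1 \<le> length m \<Longrightarrow> occ m x \<le> occ m (x @ y)"
  using occ_append[of m x y] by linarith

lemma occ_single: "occ [a] w = count_list w a"
proof (induction w)
  case Nil then show ?case by (simp add: occ_def)
next
  case (Cons b w)
  have "occ [a] (b # w) = occ [a] ([b] @ w)" by simp
  also have "\<dots> = occ [a] [b] + occ [a] w" using occ_append[of "[a]" "[b]" w] by (simp add: suf_def)
  also have "occ [a] [b] = (if b = a then 1 else 0)"
  proof -
    have "{i. i + length [a] \<le> length [b] \<and> take (length [a]) (drop i [b]) = [a]} = (if b = a then {0} else {})"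
      by auto
    then show ?thesis by (simp add: occ_def)
  qed
  finally show ?case using Cons by simp
qed

lemma finite_words_len: "finite S \<Longrightarrow> finite (words_len S l)"
proof -
  assume "finite S"
  then have "finite {xs. set xs \<subseteq> S \<and> length xs = l}" by (rule finite_lists_length_eq)
  moreover have "words_len S l = {xs. set xs \<subseteq> S \<and> length xs = l}" by (auto simp: words_len_def)
  ultimately show ?thesis by simp
qed

lemma finite_words_upto: "finite S \<Longrightarrow> finite (words_upto S k)"
proof -
  assume "finite S"
  then have "finite {xs. set xs \<subseteq> S \<and> length xs \<le> nat k}" by (rule finite_lists_length_le)
  moreover have "words_upto S k \<subseteq> {xs. set xs \<subseteq> S \<and> length xs \<le> nat k}" by (auto simp: words_upto_def)
  ultimately show ?thesis using finite_subset by blast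
qed

lemma occ_ext_sum:
  assumes S: "finite S" and w: "w \<in> lists S" and m: "length m = l" and ll: "l \<le> l'" and l1: "1 \<le> l'"
  shows "occ m w = (\<Sum>m'\<in>{m'\<in>words_len S l'. take l m' = m}. occ m' w) + occ m (suf (l'-1) w)"
proof -
  define d where "d = length w - (l' - 1)"
  have d: "d \<le> length w" by (simp add: d_def)
  have sd: "suf (l'-1) w = drop d w" by (simp add: d_def suf_def)
  let ?M = "{m'\<in>words_len S l'. take l m' = m}"
  let ?B = "\<lambda>m'. {i. i + l' \<le> length w \<and> take l' (drop i w) = m'}"
  let ?A = "{i. i < d \<and> i + length m \<le> length w \<and> take (length m) (drop i w) = m}"
  have AB: "?A = (\<Union>m'\<in>?M. ?B m')"
  proof (rule set_eqI, rule iffI)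
    fix i assume i: "i \<in> ?A"
    then have i': "i + l' \<le> length w" using l1 by (auto simp: d_def)
    have "take l' (drop i w) \<in> ?M"
      using i i' m ll w by (auto simp: words_len_def min_def dest: in_set_dropD in_set_takeD)
    then show "i \<in> (\<Union>m'\<in>?M. ?B m')" using i' by blast
  next
    fix i assume "i \<in> (\<Union>m'\<in>?M. ?B m')"
    then obtain m' where m': "m' \<in> ?M" "i + l' \<le> length w" "take l' (drop i w) = m'" by blast
    then have "take l (drop i w) = m" using ll by (metis (mono_tags, lifting) mem_Collect_eq min.absorb1 take_take)
    then show "i \<in> ?A" using m' m ll l1 by (auto simp: d_def)
  qed
  have fM: "finite ?M" using finite_words_len[OF S] by simp
  have "card ?A = (\<Sum>m'\<in>?M. card (?B m'))"
    unfolding AB by (rule card_UN_disjoint) (use fM occ_finite in auto)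
  also have "\<dots> = (\<Sum>m'\<in>?M. occ m' w)"
    by (rule sum.cong) (auto simp: occ_def words_len_def)
  finally show ?thesis using occ_drop_split[OF d, of m] sd by simp
qed

definition LTTp :: "nat set \<Rightarrow> lang \<Rightarrow> nat \<Rightarrow> nat \<Rightarrow> bool" where
  "LTTp S L \<theta> l \<longleftrightarrow> (\<forall>w1 \<in> nonempty_words S. \<forall>w2 \<in> nonempty_words S.
       pref (l - 1) w1 = pref (l - 1) w2 \<and> suf (l - 1) w1 = suf (l - 1) w2 \<and>
       (\<forall>m \<in> words_len S l. (occ m w1 < \<theta> \<or> occ m w2 < \<theta>) \<longrightarrow> occ m w1 = occ m w2)
       \<longrightarrow> (w1 \<in> L \<longleftrightarrow> w2 \<in> L))"

lemma LTTpD: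
  assumes "LTTp S L \<theta> l" "w1 \<in> nonempty_words S" "w2 \<in> nonempty_words S"
    "pref (l - 1) w1 = pref (l - 1) w2" "suf (l - 1) w1 = suf (l - 1) w2"
    "\<And>m. m \<in> words_len S l \<Longrightarrow> (occ m w1 < \<theta> \<or> occ m w2 < \<theta>) \<Longrightarrow> occ m w1 = occ m w2"
  shows "w1 \<in> L \<longleftrightarrow> w2 \<in> L"
  using assms unfolding LTTp_def by blast

lemma LTTpI:
  assumes "\<And>w1 w2. w1 \<in> nonempty_words S \<Longrightarrow> w2 \<in> nonempty_words S \<Longrightarrow>
    pref (l - 1) w1 = pref (l - 1) w2 \<Longrightarrow> suf (l - 1) w1 = suf (l - 1) w2 \<Longrightarrow>
    (\<And>m. m \<in> words_len S l \<Longrightarrow> (occ m w1 < \<theta> \<or> occ m w2 < \<theta>) \<Longrightarrow> occ m w1 = occ m w2)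
    \<Longrightarrow> (w1 \<in> L \<longleftrightarrow> w2 \<in> L)"
  shows "LTTp S L \<theta> l"
  unfolding LTTp_def using assms by blast

lemma LTT_iff: "LTT S L \<longleftrightarrow> L \<subseteq> nonempty_words S \<and> (\<exists>\<theta>\<ge>1. \<exists>l\<ge>1. LTTp S L \<theta> l)"
  unfolding LTT_def LTTp_def by blast

lemma LTTp_mono_theta:
  assumes "\<theta> \<le> \<theta>'" "LTTp S L \<theta> l" shows "LTTp S L \<theta>' l"
proof (rule LTTpI)
  fix w1 w2 assume w: "w1 \<in> nonempty_words S" "w2 \<in> nonempty_words S" and
    p: "pref (l - 1) w1 = pref (l - 1) w2" and s: "suf (l - 1) w1 = suf (l - 1) w2" and
    o: "\<And>m. m \<in> words_len S l \<Longrightarrow> (occ m w1 < \<theta>' \<or> occ m w2 < \<theta>') \<Longrightarrow> occ m w1 = occ m w2"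
  have o': "occ m w1 = occ m w2" if "m \<in> words_len S l" "occ m w1 < \<theta> \<or> occ m w2 < \<theta>" for m
    using o[OF that(1)] that(2) assms(1) by linarith
  show "w1 \<in> L \<longleftrightarrow> w2 \<in> L" by (rule LTTpD[OF assms(2) w p s o'])
qed

lemma pref_pref: "k \<le> k' \<Longrightarrow> pref k (pref k' w) = pref k w"
  by (simp add: pref_def min_def)

lemma suf_suf: assumes "k \<le> k'" shows "suf k (suf k' w) = suf k w"
proof -
  have "length w - (length w - k' + k) + (length w - k') = length w - k" using assms by arith
  then show ?thesis by (simp add: suf_def)
qed

lemma LTTp_mono_l:
  assumes S: "finite S" and l: "1 \<le> l" "l \<le> l'" and P: "LTTp S L \<theta> l"
  shows "LTTp S L \<theta> l'"
  unfolding LTTp_def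
proof (intro ballI impI)
  fix w1 w2 assume w: "w1 \<in> nonempty_words S" "w2 \<in> nonempty_words S" and
    c: "pref (l' - 1) w1 = pref (l' - 1) w2 \<and> suf (l' - 1) w1 = suf (l' - 1) w2 \<and>
       (\<forall>m \<in> words_len S l'. (occ m w1 < \<theta> \<or> occ m w2 < \<theta>) \<longrightarrow> occ m w1 = occ m w2)"
  have wl: "w1 \<in> lists S" "w2 \<in> lists S" using w by (auto simp: nonempty_words_def)
  have ll: "l - 1 \<le> l' - 1" using l by simp
  have p0: "pref (l' - 1) w1 = pref (l' - 1) w2" and s0: "suf (l' - 1) w1 = suf (l' - 1) w2"
    using c by blast+
  have p: "pref (l - 1) w1 = pref (l - 1) w2"
    using arg_cong[OF p0, of "pref (l-1)"] pref_pref[OF ll] by metis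
  have s: "suf (l - 1) w1 = suf (l - 1) w2"
    using arg_cong[OF s0, of "suf (l-1)"] suf_suf[OF ll] by metis
  have o: "occ m w1 = occ m w2" if m: "m \<in> words_len S l" and lt: "occ m w1 < \<theta> \<or> occ m w2 < \<theta>" for m
  proof -
    let ?M = "{m'\<in>words_len S l'. take l m' = m}"
    have ml: "length m = l" using m by (simp add: words_len_def)
    have e1: "occ m w1 = (\<Sum>m'\<in>?M. occ m' w1) + occ m (suf (l'-1) w1)"
      by (rule occ_ext_sum[OF S wl(1) ml l(2)]) (use l in simp)
    have e2: "occ m w2 = (\<Sum>m'\<in>?M. occ m' w2) + occ m (suf (l'-1) w2)"
      by (rule occ_ext_sum[OF S wl(2) ml l(2)]) (use l in simp)
    have fM: "finite ?M" using finite_words_len[OF S] by simp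
    have le1: "occ m' w1 \<le> occ m w1" if "m' \<in> ?M" for m'
      using member_le_sum[OF that, of "\<lambda>m'. occ m' w1", OF _ fM] e1 by simp
    have le2: "occ m' w2 \<le> occ m w2" if "m' \<in> ?M" for m'
      using member_le_sum[OF that, of "\<lambda>m'. occ m' w2", OF _ fM] e2 by simp
    have "(\<Sum>m'\<in>?M. occ m' w1) = (\<Sum>m'\<in>?M. occ m' w2)"
    proof (rule sum.cong)
      fix m' assume mm: "m' \<in> ?M"
      then have "occ m' w1 < \<theta> \<or> occ m' w2 < \<theta>" using lt le1[OF mm] le2[OF mm] by linarith
      then show "occ m' w1 = occ m' w2" using c mm by blast
    qed simp
    then show ?thesis using e1 e2 s0 by simp
  qed
  show "w1 \<in> L \<longleftrightarrow> w2 \<in> L" by (rule LTTpD[OF P w p s o])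
qed

lemma LTTp_common:
  assumes "finite S" "LTT S L1" "LTT S L2"
  shows "\<exists>\<theta>\<ge>1. \<exists>l\<ge>1. LTTp S L1 \<theta> l \<and> LTTp S L2 \<theta> l"
proof -
  obtain t1 l1 where 1: "t1 \<ge> 1" "l1 \<ge> 1" "LTTp S L1 t1 l1" using assms(2) unfolding LTT_iff by blast
  obtain t2 l2 where 2: "t2 \<ge> 1" "l2 \<ge> 1" "LTTp S L2 t2 l2" using assms(3) unfolding LTT_iff by blast
  have "LTTp S L1 (max t1 t2) (max l1 l2)"
    by (rule LTTp_mono_l[OF assms(1) 1(2) _ LTTp_mono_theta[OF _ 1(3)]]) auto
  moreover have "LTTp S L2 (max t1 t2) (max l1 l2)"
    by (rule LTTp_mono_l[OF assms(1) 2(2) _ LTTp_mono_theta[OF _ 2(3)]]) auto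
  ultimately show ?thesis using 1 2 by (intro exI[of _ "max t1 t2"] conjI exI[of _ "max l1 l2"]) auto
qed

lemma LTT_Un: assumes "finite S" "LTT S L1" "LTT S L2" shows "LTT S (L1 \<union> L2)"
proof -
  obtain t l where "t \<ge> 1" "l \<ge> 1" "LTTp S L1 t l" "LTTp S L2 t l" using LTTp_common[OF assms] by blast
  then have "LTTp S (L1 \<union> L2) t l"
    apply (intro LTTpI)
    subgoal premises pr for w1 w2
      using LTTpD[OF pr(3) pr(5-9)] LTTpD[OF pr(4) pr(5-9)] by blast
    done
  then show ?thesis using assms \<open>t \<ge> 1\<close> \<open>l \<ge> 1\<close> unfolding LTT_iff by blast
qed

lemma LTT_Int: assumes "finite S" "LTT S L1" "LTT S L2" shows "LTT S (L1 \<inter> L2)"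
proof -
  obtain t l where "t \<ge> 1" "l \<ge> 1" "LTTp S L1 t l" "LTTp S L2 t l" using LTTp_common[OF assms] by blast
  then have "LTTp S (L1 \<inter> L2) t l"
    apply (intro LTTpI)
    subgoal premises pr for w1 w2
      using LTTpD[OF pr(3) pr(5-9)] LTTpD[OF pr(4) pr(5-9)] by blast
    done
  then show ?thesis using assms \<open>t \<ge> 1\<close> \<open>l \<ge> 1\<close> unfolding LTT_iff by blast
qed

lemma LTT_compl: assumes "LTT S L" shows "LTT S (nonempty_words S - L)"
proof -
  obtain t l where "t \<ge> 1" "l \<ge> 1" "LTTp S L t l" using assms unfolding LTT_iff by blast
  then have "LTTp S (nonempty_words S - L) t l"
    apply (intro LTTpI)
    subgoal premises pr for w1 w2
      using LTTpD[OF pr(3) pr(4-8)] pr(4,5) by blast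
    done
  then show ?thesis using \<open>t \<ge> 1\<close> \<open>l \<ge> 1\<close> unfolding LTT_iff by blast
qed

lemma words_upto_neg: "k < 0 \<Longrightarrow> words_upto S k = {}"
  by (auto simp: words_upto_def)

lemma LTT_empty: "LTT S {}"
proof -
  have "LTTp S {} 1 1" by (rule LTTpI) simp
  then show ?thesis unfolding LTT_iff by auto
qed

lemma LLT_LTT:
  assumes S: "finite S" and L: "LLT S L" shows "LTT S L"
proof -
  obtain l \<pi> \<sigma> \<alpha> \<theta> where pi: "\<pi> \<subseteq> words_upto S (int l - 1)" and si: "\<sigma> \<subseteq> words_upto S (int l - 1)"
    and al: "\<forall>m \<in> words_len S l. \<alpha> m \<ge> 0" and th: "\<theta> \<ge> 0" and Ld: "L = LLin S l \<pi> \<sigma> \<alpha> \<theta>"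
    using L unfolding LLT_def by blast
  show ?thesis
  proof (cases "l = 0")
    case True
    then have "\<pi> = {}" using pi words_upto_neg[of "int l - 1" S] by simp
    then have "L = {}" using Ld by (simp add: LLin_def)
    then show ?thesis using LTT_empty by simp
  next
    case False
    then have l1: "1 \<le> l" by simp
    define W where "W = words_len S l"
    have fW: "finite W" unfolding W_def by (rule finite_words_len[OF S])
    define T where "T = (\<Sum>m\<in>W. (if \<alpha> m > 0 then \<theta> / \<alpha> m else 0))"
    define N where "N = nat \<lceil>T\<rceil> + 1"
    have N1: "N \<ge> 1" by (simp add: N_def)
    have key: "\<theta> < real N * \<alpha> m" if "m \<in> W" "\<alpha> m > 0" for m
    proof -
      have "\<theta> / \<alpha> m \<le> T" unfolding T_def
        using member_le_sum[OF that(1), of "\<lambda>m. (if \<alpha> m > 0 then \<theta> / \<alpha> m else 0)", OF _ fW] that th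
        by (simp add: divide_nonneg_pos)
      also have "T < real N" unfolding N_def by linarith
      finally show ?thesis using that(2) by (simp add: divide_less_eq)
    qed
    have sumle: "\<alpha> m * real (occ m w) \<le> (\<Sum>m\<in>W. \<alpha> m * real (occ m w))" if "m \<in> W" for m w
      by (rule member_le_sum[OF that _ fW]) (use al W_def in simp)
    have "LTTp S L N l"
    proof (rule LTTpI)
      fix w1 w2 assume w: "w1 \<in> nonempty_words S" "w2 \<in> nonempty_words S" and
        p: "pref (l - 1) w1 = pref (l - 1) w2" and s: "suf (l - 1) w1 = suf (l - 1) w2" and
        o: "\<And>m. m \<in> words_len S l \<Longrightarrow> (occ m w1 < N \<or> occ m w2 < N) \<Longrightarrow> occ m w1 = occ m w2"
      show "w1 \<in> L \<longleftrightarrow> w2 \<in> L"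
      proof (cases "\<exists>m\<in>W. \<alpha> m > 0 \<and> \<not> occ m w1 < N \<and> \<not> occ m w2 < N")
        case True
        then obtain m where m: "m \<in> W" "\<alpha> m > 0" "occ m w1 \<ge> N" "occ m w2 \<ge> N" by auto
        have big: "\<theta> < (\<Sum>m\<in>W. \<alpha> m * real (occ m w))" if "occ m w \<ge> N" for w
        proof -
          have "\<theta> < real N * \<alpha> m" by (rule key[OF m(1,2)])
          also have "\<dots> \<le> \<alpha> m * real (occ m w)" using that m(2) by (simp add: mult.commute)
          also have "\<dots> \<le> (\<Sum>m\<in>W. \<alpha> m * real (occ m w))" by (rule sumle[OF m(1)])
          finally show ?thesis .
        qed
        have "w1 \<notin> L" "w2 \<notin> L" using big[OF m(3)] big[OF m(4)] unfolding Ld LLin_def W_def by auto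
        then show ?thesis by simp
      next
        case False
        have "(\<Sum>m\<in>W. \<alpha> m * real (occ m w1)) = (\<Sum>m\<in>W. \<alpha> m * real (occ m w2))"
        proof (rule sum.cong)
          fix m assume m: "m \<in> W"
          show "\<alpha> m * real (occ m w1) = \<alpha> m * real (occ m w2)"
          proof (cases "\<alpha> m > 0")
            case True
            then have "occ m w1 < N \<or> occ m w2 < N" using False m by auto
            then show ?thesis using o m W_def by simp
          next
            case False
            then have "\<alpha> m = 0" using al m W_def by force
            then show ?thesis by simp
          qed
        qed simp
        then show ?thesis unfolding Ld LLin_def W_def using w p s by auto
      qed
    qed
    then show ?thesis unfolding LTT_iff using N1 l1 Ld by (auto simp: LLin_def)
  qed
qed

lemma ui_LTT: assumes "finite S" "union_inter_cl LLT S L" shows "LTT S L"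
  using assms(2) by induction (auto intro: LLT_LTT LTT_Un LTT_Int assms(1))

lemma bool_LTT: assumes "finite S" "bool_cl LLT S L" shows "LTT S L"
  using assms(2) by induction (auto intro: LLT_LTT LTT_Un LTT_Int LTT_compl assms(1))

lemma union_ui: "union_cl C S L \<Longrightarrow> union_inter_cl C S L"
  by (induction rule: union_cl.induct) (auto intro: union_inter_cl.intros)

lemma ui_bool: "union_inter_cl C S L \<Longrightarrow> bool_cl C S L"
  by (induction rule: union_inter_cl.induct) (auto intro: bool_cl.intros)

lemma union_mono: assumes "\<And>L. C S L \<Longrightarrow> D S L" "union_cl C S L" shows "union_cl D S L"
  using assms(2) by induction (auto intro: union_cl.intros assms(1))

lemma infixes_sub_len: "w \<in> lists S \<Longrightarrow> infixes l w \<subseteq> words_len S l"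
  by (auto simp: infixes_def words_len_def dest: in_set_dropD in_set_takeD)

lemma occ_zero_iff: "length m = l \<Longrightarrow> occ m w = 0 \<longleftrightarrow> m \<notin> infixes l w"
proof -
  assume ml: "length m = l"
  have f: "finite {i. i + length m \<le> length w \<and> take (length m) (drop i w) = m}" by (rule occ_finite)
  show ?thesis unfolding occ_def infixes_def using card_0_eq[OF f] ml by auto
qed

lemma pref_upto: "w \<in> lists S \<Longrightarrow> 1 \<le> l \<Longrightarrow> pref (l - 1) w \<in> words_upto S (int l - 1)"
  by (auto simp: pref_def words_upto_def dest: in_set_takeD)

lemma suf_upto: "w \<in> lists S \<Longrightarrow> 1 \<le> l \<Longrightarrow> suf (l - 1) w \<in> words_upto S (int l - 1)"
  by (auto simp: suf_def words_upto_def dest: in_set_dropD)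

lemma SLT_LLT: assumes S: "finite S" and "SLT S L" shows "LLT S L"
proof -
  obtain l \<pi> \<sigma> \<mu> where L: "L \<subseteq> nonempty_words S" and l: "l \<ge> 1" and mu: "\<mu> \<subseteq> words_len S l"
    and P: "\<forall>w \<in> nonempty_words S. w \<in> L \<longleftrightarrow>
          pref (l - 1) w \<in> \<pi> \<and> infixes l w \<subseteq> \<mu> \<and> suf (l - 1) w \<in> \<sigma>"
    using assms unfolding SLT_def by blast
  define \<alpha> where "\<alpha> = (\<lambda>m. if m \<in> \<mu> then 0 else (1::real))"
  define W where "W = words_len S l"
  have fW: "finite W" using finite_words_len[OF S] W_def by simp
  have sum0: "(\<Sum>m\<in>W. \<alpha> m * real (occ m w)) \<le> 0 \<longleftrightarrow> infixes l w \<subseteq> \<mu>" if w: "w \<in> lists S" for w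
  proof -
    have nn: "\<forall>m\<in>W. 0 \<le> \<alpha> m * real (occ m w)" by (simp add: \<alpha>_def)
    have "(\<Sum>m\<in>W. \<alpha> m * real (occ m w)) \<le> 0 \<longleftrightarrow> (\<Sum>m\<in>W. \<alpha> m * real (occ m w)) = 0"
    proof -
      have "0 \<le> (\<Sum>m\<in>W. \<alpha> m * real (occ m w))" by (rule sum_nonneg) (use nn in auto)
      then show ?thesis by linarith
    qed
    also have "\<dots> \<longleftrightarrow> (\<forall>m\<in>W. \<alpha> m * real (occ m w) = 0)"
      by (rule sum_nonneg_eq_0_iff) (use nn fW in auto)
    also have "\<dots> \<longleftrightarrow> (\<forall>m\<in>W. m \<notin> \<mu> \<longrightarrow> occ m w = 0)" by (auto simp: \<alpha>_def)
    also have "\<dots> \<longleftrightarrow> (\<forall>m\<in>W. m \<notin> \<mu> \<longrightarrow> m \<notin> infixes l w)"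
      using occ_zero_iff by (auto simp: W_def words_len_def)
    also have "\<dots> \<longleftrightarrow> infixes l w \<subseteq> \<mu>" using infixes_sub_len[OF w, of l] W_def by auto
    finally show ?thesis .
  qed
  have "L = LLin S l (\<pi> \<inter> words_upto S (int l - 1)) (\<sigma> \<inter> words_upto S (int l - 1)) \<alpha> 0"
  proof (rule set_eqI)
    fix w
    show "w \<in> L \<longleftrightarrow> w \<in> LLin S l (\<pi> \<inter> words_upto S (int l - 1)) (\<sigma> \<inter> words_upto S (int l - 1)) \<alpha> 0"
    proof (cases "w \<in> nonempty_words S")
      case True
      then have wl: "w \<in> lists S" by (simp add: nonempty_words_def)
      show ?thesis using P True sum0[OF wl] pref_upto[OF wl l] suf_upto[OF wl l]
        unfolding LLin_def W_def by auto
    next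
      case False then show ?thesis using L by (auto simp: LLin_def)
    qed
  qed
  then show ?thesis unfolding LLT_def by (intro exI[of _ l] exI[of _ "\<pi> \<inter> words_upto S (int l - 1)"]
      exI[of _ "\<sigma> \<inter> words_upto S (int l - 1)"] exI[of _ \<alpha>] exI[of _ 0]) (auto simp: \<alpha>_def)
qed

lemma pref_rep: "k \<le> N \<Longrightarrow> pref k (replicate N c @ r) = replicate k c"
  by (simp add: pref_def)

lemma suf_rep: "k \<le> N \<Longrightarrow> suf k (r @ replicate N c) = replicate k c"
  by (simp add: suf_def)

lemma suf_rep0: "k \<le> N \<Longrightarrow> suf k (replicate N c) = replicate k c"
  using suf_rep[of k N "[]" c] by simp

lemma infixes_prefix: "infixes l x \<subseteq> infixes l (x @ z)"
  unfolding infixes_def by force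

lemma infixes_cover:
  assumes "w = x @ z" "w = u @ y" "length u + l \<le> length x + 1"
  shows "infixes l w \<subseteq> infixes l x \<union> infixes l y"
proof
  fix v assume "v \<in> infixes l w"
  then obtain i where i: "i + l \<le> length w" "v = take l (drop i w)" by (auto simp: infixes_def)
  show "v \<in> infixes l x \<union> infixes l y"
  proof (cases "i + l \<le> length x")
    case True
    then have "v = take l (drop i x)" using i assms(1) by simp
    then show ?thesis using True by (auto simp: infixes_def)
  next
    case False
    then have iu: "length u \<le> i" using assms(3) by linarith
    then have "v = take l (drop (i - length u) y)" using i assms(2) by simp
    moreover have "i - length u + l \<le> length y" using i iu assms(2) by simp
    ultimately show ?thesis by (auto simp: infixes_def)
  qed
qed

lemma infixes_single: "[a] \<in> infixes 1 w \<longleftrightarrow> a \<in> set w"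
proof -
  have "take 1 (drop i w) = [w ! i]" if "i < length w" for i
    using that by (simp add: Cons_nth_drop_Suc[symmetric])
  then have "[a] \<in> infixes 1 w \<longleftrightarrow> (\<exists>i < length w. w ! i = a)"
    unfolding infixes_def by (auto; metis Suc_eq_plus1 Suc_le_eq list.inject)
  then show ?thesis by (simp add: in_set_conv_nth)
qed

lemma LLT_occ_le:
  assumes S: "finite S" and l: "1 \<le> l" and m: "m \<in> words_len S l" and t: "0 \<le> t"
  shows "LLT S {w \<in> nonempty_words S. real (occ m w) \<le> t}"
proof -
  define \<alpha> where "\<alpha> = (\<lambda>x. if x = m then 1 else (0::real))"
  have fW: "finite (words_len S l)" by (rule finite_words_len[OF S])
  have sm: "(\<Sum>x\<in>words_len S l. \<alpha> x * real (occ x w)) = real (occ m w)" for w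
  proof -
    have "(\<Sum>x\<in>words_len S l. \<alpha> x * real (occ x w)) = (\<Sum>x\<in>words_len S l. if x = m then real (occ x w) else 0)"
      by (rule sum.cong) (auto simp: \<alpha>_def)
    also have "\<dots> = real (occ m w)" using fW m by simp
    finally show ?thesis .
  qed
  have "{w \<in> nonempty_words S. real (occ m w) \<le> t} =
        LLin S l (words_upto S (int l - 1)) (words_upto S (int l - 1)) \<alpha> t"
    unfolding LLin_def sm using pref_upto[OF _ l] suf_upto[OF _ l] by (auto simp: nonempty_words_def)
  then show ?thesis unfolding LLT_def using t
    by (intro exI[of _ l] exI[of _ "words_upto S (int l - 1)"] exI[of _ "words_upto S (int l - 1)"]
        exI[of _ \<alpha>] exI[of _ t]) (auto simp: \<alpha>_def)
qed

lemma LLT_count_le: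
  assumes S: "finite S" and a: "a \<in> S" and t: "0 \<le> t"
  shows "LLT S {w \<in> nonempty_words S. real (count_list w a) \<le> t}"
  using LLT_occ_le[OF S _ _ t, of 1 "[a]"] a by (simp add: occ_single words_len_def)

definition wp :: "nat \<Rightarrow> word" where "wp N = replicate N 1 @ [0] @ replicate N 1"
definition ww :: "nat \<Rightarrow> word" where "ww N = wp N @ [0] @ replicate N 1"
definition QB :: "lang \<Rightarrow> bool" where "QB L \<longleftrightarrow> (\<exists>N0. \<forall>N\<ge>N0. wp N \<in> L \<longrightarrow> ww N \<in> L)"
definition LB :: lang where "LB = {w \<in> nonempty_words {0,1}. real (count_list w 0) \<le> 1}"

lemma wp_NW: "wp N \<in> nonempty_words {0,1}" by (auto simp: wp_def nonempty_words_def)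
lemma ww_NW: "ww N \<in> nonempty_words {0,1}" by (auto simp: ww_def wp_def nonempty_words_def)

lemma infixes_ww: assumes "l \<le> N + 1" shows "infixes l (ww N) = infixes l (wp N)"
proof
  have "infixes l (ww N) \<subseteq> infixes l (wp N) \<union> infixes l (wp N)"
    by (rule infixes_cover[of _ "wp N" "[0] @ replicate N 1" "replicate N 1 @ [0]"])
       (use assms in \<open>auto simp: ww_def wp_def\<close>)
  then show "infixes l (ww N) \<subseteq> infixes l (wp N)" by simp
  show "infixes l (wp N) \<subseteq> infixes l (ww N)" unfolding ww_def by (rule infixes_prefix)
qed

lemma pref_wp: "l \<le> N \<Longrightarrow> pref l (wp N) = replicate l 1"
  unfolding wp_def by (rule pref_rep)
lemma pref_ww: "l \<le> N \<Longrightarrow> pref l (ww N) = replicate l 1"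
  unfolding ww_def wp_def by (simp add: pref_rep)
lemma suf_wp: "l \<le> N \<Longrightarrow> suf l (wp N) = replicate l 1"
proof -
  assume "l \<le> N"
  moreover have "wp N = (replicate N 1 @ [0]) @ replicate N 1" by (simp add: wp_def)
  ultimately show ?thesis by (metis suf_rep)
qed
lemma suf_ww: "l \<le> N \<Longrightarrow> suf l (ww N) = replicate l 1"
proof -
  assume "l \<le> N"
  moreover have "ww N = (wp N @ [0]) @ replicate N 1" by (simp add: ww_def)
  ultimately show ?thesis by (metis suf_rep)
qed

lemma SLT_QB: assumes "SLT {0,1} L" shows "QB L"
proof -
  obtain l \<pi> \<sigma> \<mu> where l: "l \<ge> 1"
    and P: "\<forall>w \<in> nonempty_words {0,1}. w \<in> L \<longleftrightarrow>
          pref (l - 1) w \<in> \<pi> \<and> infixes l w \<subseteq> \<mu> \<and> suf (l - 1) w \<in> \<sigma>"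
    using assms unfolding SLT_def by blast
  have "ww N \<in> L" if "N \<ge> l" "wp N \<in> L" for N
  proof -
    have "pref (l - 1) (wp N) \<in> \<pi> \<and> infixes l (wp N) \<subseteq> \<mu> \<and> suf (l - 1) (wp N) \<in> \<sigma>"
      using P wp_NW that(2) by blast
    moreover have "pref (l - 1) (ww N) = pref (l - 1) (wp N)" "suf (l - 1) (ww N) = suf (l - 1) (wp N)"
      "infixes l (ww N) = infixes l (wp N)"
      using that(1) by (simp_all add: pref_wp pref_ww suf_wp suf_ww infixes_ww)
    ultimately show ?thesis using P ww_NW by simp
  qed
  then show ?thesis unfolding QB_def by blast
qed

lemma QB_Un: assumes "QB L1" "QB L2" shows "QB (L1 \<union> L2)"
proof -
  obtain a b where "\<forall>N\<ge>a. wp N \<in> L1 \<longrightarrow> ww N \<in> L1" "\<forall>N\<ge>b. wp N \<in> L2 \<longrightarrow> ww N \<in> L2"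
    using assms unfolding QB_def by blast
  then have "\<forall>N\<ge>max a b. wp N \<in> L1 \<union> L2 \<longrightarrow> ww N \<in> L1 \<union> L2" by auto
  then show ?thesis unfolding QB_def by blast
qed

lemma ucl_SLT_QB: "union_cl SLT {0,1} L \<Longrightarrow> QB L"
  by (induction rule: union_cl.induct) (auto intro: SLT_QB QB_Un)

lemma count_wp: "count_list (wp N) 0 = 1" by (simp add: wp_def)
lemma count_ww: "count_list (ww N) 0 = 2" by (simp add: ww_def wp_def)

lemma LB_not_QB: "\<not> QB LB"
  unfolding QB_def LB_def using count_wp count_ww wp_NW by auto

lemma LB_LLT: "LLT {0,1} LB"
  unfolding LB_def by (rule LLT_count_le) auto

lemma LB_not_LT: "\<not> LT {0,1} LB"
proof
  assume "LT {0,1} LB"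
  then obtain l where l: "l \<ge> 1" and P: "\<forall>w1 \<in> nonempty_words {0,1}. \<forall>w2 \<in> nonempty_words {0,1}.
       pref (l - 1) w1 = pref (l - 1) w2 \<and> infixes l w1 = infixes l w2 \<and>
       suf (l - 1) w1 = suf (l - 1) w2 \<longrightarrow> (w1 \<in> LB \<longleftrightarrow> w2 \<in> LB)"
    unfolding LT_def by blast
  have "pref (l - 1) (ww l) = pref (l - 1) (wp l)" "suf (l - 1) (ww l) = suf (l - 1) (wp l)"
      "infixes l (ww l) = infixes l (wp l)"
    by (simp_all add: pref_wp pref_ww suf_wp suf_ww infixes_ww)
  then have "ww l \<in> LB \<longleftrightarrow> wp l \<in> LB" using P ww_NW wp_NW by metis
  then show False unfolding LB_def using count_wp count_ww wp_NW by auto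
qed

definition QA :: "lang \<Rightarrow> bool" where "QA L \<longleftrightarrow> (\<exists>N0. \<forall>N\<ge>N0. wp N \<in> L \<longrightarrow> replicate N 1 \<in> L)"
definition LA :: lang where "LA = {w \<in> nonempty_words {0,1}. 0 \<in> set w}"

lemma LLT_QA: assumes "LLT {0,1} L" shows "QA L"
proof -
  obtain l \<pi> \<sigma> \<alpha> \<theta> where pi: "\<pi> \<subseteq> words_upto {0,1} (int l - 1)"
    and al: "\<forall>m \<in> words_len {0,1} l. \<alpha> m \<ge> 0" and Ld: "L = LLin {0,1} l \<pi> \<sigma> \<alpha> \<theta>"
    using assms unfolding LLT_def by blast
  show ?thesis
  proof (cases "l = 0")
    case True
    then have "\<pi> = {}" using pi words_upto_neg[of "int l - 1" "{0,1}"] by simp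
    then have "L = {}" using Ld by (simp add: LLin_def)
    then show ?thesis unfolding QA_def by simp
  next
    case False
    have "replicate N 1 \<in> L" if N: "N \<ge> l" and w: "wp N \<in> L" for N
    proof -
      have N1: "N \<ge> 1" using N False by simp
      have le: "(\<Sum>m\<in>words_len {0,1} l. \<alpha> m * real (occ m (replicate N 1)))
              \<le> (\<Sum>m\<in>words_len {0,1} l. \<alpha> m * real (occ m (wp N)))"
      proof (rule sum_mono)
        fix m assume m: "m \<in> words_len {0,1} l"
        then have "1 \<le> length m" using False by (simp add: words_len_def)
        then have "occ m (replicate N 1) \<le> occ m (wp N)" unfolding wp_def by (rule occ_mono_append)
        then show "\<alpha> m * real (occ m (replicate N 1)) \<le> \<alpha> m * real (occ m (wp N))"
          using al m by (simp add: mult_left_mono)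
      qed
      have "pref (l - 1) (replicate N 1) = pref (l - 1) (wp N)"
        using N pref_wp[of "l-1" N] pref_rep[of "l-1" N 1 "[]"] by simp
      moreover have "suf (l - 1) (replicate N 1) = suf (l - 1) (wp N)"
        using N suf_wp[of "l-1" N] suf_rep0[of "l-1" N 1] by simp
      moreover have "replicate N 1 \<in> nonempty_words {0,1}" using N1 by (auto simp: nonempty_words_def)
      ultimately show ?thesis using w le unfolding Ld LLin_def by auto
    qed
    then show ?thesis unfolding QA_def by blast
  qed
qed

lemma QA_Un: assumes "QA L1" "QA L2" shows "QA (L1 \<union> L2)"
proof -
  obtain a b where "\<forall>N\<ge>a. wp N \<in> L1 \<longrightarrow> replicate N 1 \<in> L1" "\<forall>N\<ge>b. wp N \<in> L2 \<longrightarrow> replicate N 1 \<in> L2"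
    using assms unfolding QA_def by blast
  then have "\<forall>N\<ge>max a b. wp N \<in> L1 \<union> L2 \<longrightarrow> replicate N 1 \<in> L1 \<union> L2" by auto
  then show ?thesis unfolding QA_def by blast
qed

lemma QA_Int: assumes "QA L1" "QA L2" shows "QA (L1 \<inter> L2)"
proof -
  obtain a b where "\<forall>N\<ge>a. wp N \<in> L1 \<longrightarrow> replicate N 1 \<in> L1" "\<forall>N\<ge>b. wp N \<in> L2 \<longrightarrow> replicate N 1 \<in> L2"
    using assms unfolding QA_def by blast
  then have "\<forall>N\<ge>max a b. wp N \<in> L1 \<inter> L2 \<longrightarrow> replicate N 1 \<in> L1 \<inter> L2" by auto
  then show ?thesis unfolding QA_def by blast
qed

lemma ui_QA: "union_inter_cl LLT {0,1} L \<Longrightarrow> QA L"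
  by (induction rule: union_inter_cl.induct) (auto intro: LLT_QA QA_Un QA_Int)

lemma LA_not_QA: "\<not> QA LA"
  unfolding QA_def LA_def using wp_NW by (auto simp: wp_def)

lemma LA_LT: "LT {0,1} LA"
  unfolding LT_def LA_def
  by (intro conjI exI[of _ 1]) (auto simp: infixes_single[symmetric])

lemma LA_LTT: "LTT {0,1} LA"
proof -
  have "LTTp {0,1} LA 1 1"
  proof (rule LTTpI)
    fix w1 w2 assume w: "w1 \<in> nonempty_words {0,1}" "w2 \<in> nonempty_words {0,1}" and
      o: "\<And>m. m \<in> words_len {0,1} 1 \<Longrightarrow> (occ m w1 < 1 \<or> occ m w2 < 1) \<Longrightarrow> occ m w1 = occ m w2"
    have "[0] \<in> words_len {0,1} 1" by (simp add: words_len_def)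
    from o[OF this] have "(count_list w1 0 = 0) = (count_list w2 0 = 0)" by (auto simp: occ_single)
    then show "w1 \<in> LA \<longleftrightarrow> w2 \<in> LA" using w unfolding LA_def by (simp add: count_list_0_iff)
  qed
  then show ?thesis unfolding LTT_iff LA_def by auto
qed

lemma occ3:
  assumes m: "1 \<le> length m" and N: "length m - 1 \<le> N"
  shows "occ m (replicate N 2 @ [x] @ replicate N 2 @ [y] @ replicate N 2) =
    occ m (replicate N 2) + occ m (replicate (length m - 1) 2 @ [x] @ replicate N 2)
      + occ m (replicate (length m - 1) 2 @ [y] @ replicate N 2)"
proof -
  let ?s = "replicate (length m - 1) 2 :: word"
  let ?R = "replicate N 2 :: word"
  have "occ m (?R @ [x] @ ?R @ [y] @ ?R) = occ m ?R + occ m (?s @ [x] @ ?R @ [y] @ ?R)"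
    using occ_append[OF m, of ?R "[x] @ ?R @ [y] @ ?R"] suf_rep0[OF N] by simp
  also have "?s @ [x] @ ?R @ [y] @ ?R = (?s @ [x] @ ?R) @ ([y] @ ?R)" by simp
  also have "occ m \<dots> = occ m (?s @ [x] @ ?R) + occ m (?s @ [y] @ ?R)"
  proof -
    have "suf (length m - 1) (?s @ [x] @ ?R) = ?s" using suf_rep[OF N, of "?s @ [x]" 2] by simp
    then show ?thesis using occ_append[OF m, of "?s @ [x] @ ?R" "[y] @ ?R"] by simp
  qed
  finally show ?thesis by simp
qed

definition LC :: lang where
  "LC = {w \<in> nonempty_words {0,1,2}. real (count_list w 0) \<le> 0} \<union>
        {w \<in> nonempty_words {0,1,2}. real (count_list w 1) \<le> 0}"

lemma LC_union: "union_cl LLT {0,1,2} LC"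
  unfolding LC_def by (intro union_cl.un union_cl.base LLT_count_le) auto

lemma LC_not_LLT: "\<not> LLT {0,1,2} LC"
proof
  assume "LLT {0,1,2} LC"
  then obtain l \<pi> \<sigma> \<alpha> \<theta> where pi: "\<pi> \<subseteq> words_upto {0,1,2} (int l - 1)"
    and Ld: "LC = LLin {0,1,2} l \<pi> \<sigma> \<alpha> \<theta>"
    unfolding LLT_def by blast
  show False
  proof (cases "l = 0")
    case True
    then have "\<pi> = {}" using pi words_upto_neg[of "int l - 1" "{0,1,2}"] by simp
    then have "LC = {}" using Ld by (simp add: LLin_def)
    moreover have "[2] \<in> LC" by (simp add: LC_def nonempty_words_def)
    ultimately show False by simp
  next
    case False
    define R where "R = (replicate l 2 :: word)"
    define W where "W = words_len {0,1,2} l"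
    define w where "w = (\<lambda>x y. R @ [x] @ R @ [y] @ R)"
    define g where "g = (\<Sum>m\<in>W. \<alpha> m * real (occ m R))"
    define f where "f = (\<lambda>x. \<Sum>m\<in>W. \<alpha> m * real (occ m (replicate (l - 1) 2 @ [x] @ R)))"
    have sm: "(\<Sum>m\<in>W. \<alpha> m * real (occ m (w x y))) = g + f x + f y" for x y
    proof -
      have "(\<Sum>m\<in>W. \<alpha> m * real (occ m (w x y))) = (\<Sum>m\<in>W. \<alpha> m * real (occ m R)
         + \<alpha> m * real (occ m (replicate (l - 1) 2 @ [x] @ R))
         + \<alpha> m * real (occ m (replicate (l - 1) 2 @ [y] @ R)))"
      proof (rule sum.cong)
        fix m assume "m \<in> W"
        then have ml: "length m = l" by (simp add: W_def words_len_def)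
        then show "\<alpha> m * real (occ m (w x y)) = \<alpha> m * real (occ m R)
         + \<alpha> m * real (occ m (replicate (l - 1) 2 @ [x] @ R))
         + \<alpha> m * real (occ m (replicate (l - 1) 2 @ [y] @ R))"
          using occ3[of m l x y] False unfolding w_def R_def by (simp add: distrib_left)
      qed simp
      then show ?thesis unfolding g_def f_def by (simp add: sum.distrib)
    qed
    have pw: "pref (l - 1) (w x y) = replicate (l - 1) 2" for x y
      unfolding w_def R_def by (simp add: pref_rep)
    have sw: "suf (l - 1) (w x y) = replicate (l - 1) 2" for x y
    proof -
      have "w x y = (R @ [x] @ R @ [y]) @ replicate l 2" by (simp add: w_def R_def)
      then show ?thesis by (metis suf_rep diff_le_self)
    qed
    have nw: "w x y \<in> nonempty_words {0,1,2}" if "x \<in> {0,1,2}" "y \<in> {0,1,2}" for x y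
      using that by (auto simp: w_def R_def nonempty_words_def)
    have "w 0 0 \<in> LC" using nw[of 0 0] by (simp add: LC_def w_def R_def)
    then have "f 0 \<le> (\<theta> - g) / 2" "pref (l - 1) (w 0 0) \<in> \<pi>" "suf (l - 1) (w 0 0) \<in> \<sigma>"
      unfolding Ld LLin_def using sm[of 0 0] W_def by auto
    moreover have "w 1 1 \<in> LC" using nw[of 1 1] by (simp add: LC_def w_def R_def)
    then have "f 1 \<le> (\<theta> - g) / 2" unfolding Ld LLin_def using sm[of 1 1] W_def by auto
    ultimately have "w 0 1 \<in> LLin {0,1,2} l \<pi> \<sigma> \<alpha> \<theta>"
      unfolding LLin_def using sm[of 0 1] nw[of 0 1] pw sw W_def by auto
    then have "w 0 1 \<in> LC" using Ld by simp
    then show False by (simp add: LC_def w_def R_def)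
  qed
qed

lemma LLT_empty: "LLT S {}"
  unfolding LLT_def
  by (intro exI[of _ 0] exI[of _ "{}"] exI[of _ "\<lambda>_. 0"] exI[of _ 0]) (auto simp: LLin_def)

lemma bool_empty: "bool_cl LLT S {}" by (rule bool_cl.base) (rule LLT_empty)

lemma bool_Union: "finite I \<Longrightarrow> (\<forall>i\<in>I. bool_cl C S (F i)) \<Longrightarrow> bool_cl C S X \<Longrightarrow> bool_cl C S (X \<union> \<Union>(F ` I))"
proof (induction I rule: finite_induct)
  case empty then show ?case by simp
next
  case (insert x I)
  have "X \<union> \<Union>(F ` insert x I) = (X \<union> \<Union>(F ` I)) \<union> F x" by auto
  then show ?case using insert by (auto intro: bool_cl.un)
qed

lemma bool_Inter: "finite I \<Longrightarrow> (\<forall>i\<in>I. bool_cl C S (F i)) \<Longrightarrow> bool_cl C S X \<Longrightarrow> bool_cl C S (X \<inter> \<Inter>(F ` I))"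
proof (induction I rule: finite_induct)
  case empty then show ?case by simp
next
  case (insert x I)
  have "X \<inter> \<Inter>(F ` insert x I) = (X \<inter> \<Inter>(F ` I)) \<inter> F x" by auto
  then show ?case using insert by (auto intro: bool_cl.inter)
qed

lemma bool_le:
  assumes S: "finite S" and l: "1 \<le> l" and m: "m \<in> words_len S l"
  shows "bool_cl LLT S {w \<in> nonempty_words S. real (occ m w) \<le> t}"
proof (cases "t < 0")
  case True
  then have e: "{w \<in> nonempty_words S. real (occ m w) \<le> t} = {}" by auto
  show ?thesis unfolding e by (rule bool_empty)
next
  case False
  then show ?thesis by (intro bool_cl.base LLT_occ_le[OF S l m]) simp
qed

lemma bool_min:
  assumes S: "finite S" and l: "1 \<le> l" and m: "m \<in> words_len S l" and k: "k \<le> \<theta>"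
  shows "bool_cl LLT S {w \<in> nonempty_words S. min (occ m w) \<theta> = k}"
proof (cases "k < \<theta>")
  case True
  have e: "{w \<in> nonempty_words S. min (occ m w) \<theta> = k} =
    {w \<in> nonempty_words S. real (occ m w) \<le> real k} \<inter>
    (nonempty_words S - {w \<in> nonempty_words S. real (occ m w) \<le> real k - 1})"
    using True by auto
  show ?thesis unfolding e by (intro bool_cl.inter bool_cl.compl bool_le[OF S l m])
next
  case False
  then have e: "{w \<in> nonempty_words S. min (occ m w) \<theta> = k} =
    nonempty_words S - {w \<in> nonempty_words S. real (occ m w) \<le> real \<theta> - 1}"
    using k by auto
  show ?thesis unfolding e by (intro bool_cl.compl bool_le[OF S l m])
qed

lemma bool_pref:
  assumes l: "1 \<le> l" and p: "p \<in> words_upto S (int l - 1)"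
  shows "bool_cl LLT S {w \<in> nonempty_words S. pref (l - 1) w = p}"
proof -
  have "{w \<in> nonempty_words S. pref (l - 1) w = p} = LLin S l {p} (words_upto S (int l - 1)) (\<lambda>_. 0) 0"
    unfolding LLin_def using suf_upto[OF _ l] by (auto simp: nonempty_words_def)
  then show ?thesis using p unfolding LLT_def
    by (intro bool_cl.base exI[of _ l] exI[of _ "{p}"] exI[of _ "words_upto S (int l - 1)"]
       exI[of _ "\<lambda>_. 0"] exI[of _ 0]) auto
qed

lemma bool_suf:
  assumes l: "1 \<le> l" and p: "p \<in> words_upto S (int l - 1)"
  shows "bool_cl LLT S {w \<in> nonempty_words S. suf (l - 1) w = p}"
proof -
  have "{w \<in> nonempty_words S. suf (l - 1) w = p} = LLin S l (words_upto S (int l - 1)) {p} (\<lambda>_. 0) 0"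
    unfolding LLin_def using pref_upto[OF _ l] by (auto simp: nonempty_words_def)
  then show ?thesis using p unfolding LLT_def
    by (intro bool_cl.base exI[of _ l] exI[of _ "words_upto S (int l - 1)"] exI[of _ "{p}"]
       exI[of _ "\<lambda>_. 0"] exI[of _ 0]) auto
qed

lemma LTT_bool:
  assumes S: "finite S" and L: "LTT S L" shows "bool_cl LLT S L"
proof -
  obtain \<theta> l where th: "\<theta> \<ge> 1" and l: "l \<ge> 1" and P: "LTTp S L \<theta> l" and LN: "L \<subseteq> nonempty_words S"
    using L unfolding LTT_iff by blast
  define W where "W = words_len S l"
  have fW: "finite W" unfolding W_def by (rule finite_words_len[OF S])
  define sig where "sig = (\<lambda>w. (pref (l - 1) w, suf (l - 1) w, \<lambda>m. if m \<in> W then min (occ m w) \<theta> else 0))"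
  define cls where "cls = (\<lambda>s. {w \<in> nonempty_words S. sig w = s})"
  have sig_eq: "sig w = sig v \<longleftrightarrow> pref (l - 1) w = pref (l - 1) v \<and> suf (l - 1) w = suf (l - 1) v \<and>
      (\<forall>m\<in>W. min (occ m w) \<theta> = min (occ m v) \<theta>)" for w v
    unfolding sig_def by (auto simp: fun_eq_iff)
  have Leq: "L = \<Union>(cls ` sig ` L)"
  proof
    show "L \<subseteq> \<Union>(cls ` sig ` L)" using LN unfolding cls_def by blast
  next
    show "\<Union>(cls ` sig ` L) \<subseteq> L"
    proof
      fix w assume "w \<in> \<Union>(cls ` sig ` L)"
      then obtain v where v: "v \<in> L" and w: "w \<in> nonempty_words S" "sig w = sig v"
        unfolding cls_def by blast
      have vN: "v \<in> nonempty_words S" using v LN by blast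
      have c: "pref (l - 1) w = pref (l - 1) v" "suf (l - 1) w = suf (l - 1) v"
        "\<And>m. m \<in> W \<Longrightarrow> min (occ m w) \<theta> = min (occ m v) \<theta>" using w(2) sig_eq by blast+
      have o: "occ m w = occ m v" if "m \<in> words_len S l" "occ m w < \<theta> \<or> occ m v < \<theta>" for m
        using c(3)[of m] that W_def by (auto simp: min_def split: if_splits)
      show "w \<in> L" using LTTpD[OF P w(1) vN c(1) c(2) o] v by blast
    qed
  qed
  have fin: "finite (sig ` L)"
  proof (rule finite_subset)
    show "sig ` L \<subseteq> words_upto S (int l - 1) \<times> words_upto S (int l - 1) \<times>
      {f. \<forall>m. (m \<in> W \<longrightarrow> f m \<in> {..\<theta>}) \<and> (m \<notin> W \<longrightarrow> f m = 0)}"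
    proof
      fix s assume "s \<in> sig ` L"
      then obtain x where x: "x \<in> L" "s = sig x" by blast
      then have xl: "x \<in> lists S" using LN by (auto simp: nonempty_words_def)
      show "s \<in> words_upto S (int l - 1) \<times> words_upto S (int l - 1) \<times>
        {f. \<forall>m. (m \<in> W \<longrightarrow> f m \<in> {..\<theta>}) \<and> (m \<notin> W \<longrightarrow> f m = 0)}"
        using x(2) pref_upto[OF xl l] suf_upto[OF xl l] unfolding sig_def by auto
    qed
    show "finite (words_upto S (int l - 1) \<times> words_upto S (int l - 1) \<times>
      {f. \<forall>m. (m \<in> W \<longrightarrow> f m \<in> {..\<theta>}) \<and> (m \<notin> W \<longrightarrow> f m = 0)})"
      using finite_words_upto[OF S] finite_set_of_finite_funs[OF fW, of "{..\<theta>}" 0] by auto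
  qed
  have cb: "bool_cl LLT S (cls s)" if sL: "s \<in> sig ` L" for s
  proof -
    obtain v where v: "v \<in> L" "s = sig v" using sL by blast
    have vl: "v \<in> lists S" using v LN by (auto simp: nonempty_words_def)
    have e: "cls s = ({w \<in> nonempty_words S. pref (l - 1) w = pref (l - 1) v} \<inter>
                    {w \<in> nonempty_words S. suf (l - 1) w = suf (l - 1) v}) \<inter>
                    \<Inter>((\<lambda>m. {w \<in> nonempty_words S. min (occ m w) \<theta> = min (occ m v) \<theta>}) ` W)"
      unfolding cls_def v(2) sig_eq by auto
    show ?thesis unfolding e
      by (intro bool_Inter fW ballI bool_min[OF S l] bool_cl.inter bool_pref[OF l] bool_suf[OF l]
          pref_upto[OF vl l] suf_upto[OF vl l]) (auto simp: W_def)
  qed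
  have "bool_cl LLT S ({} \<union> \<Union>(cls ` sig ` L))"
    by (rule bool_Union) (use fin cb bool_empty in auto)
  then show ?thesis using Leq by simp
qed

theorem mainTheorem9:
  shows "strict_subclass SLT LLT \<and> strict_subclass LLT (union_cl LLT) \<and>
         class_subset (union_cl LLT) (union_inter_cl LLT) \<and>
         strict_subclass (union_inter_cl LLT) LTT \<and>
         strict_subclass (union_cl SLT) (union_cl LLT) \<and>
         incomparable LLT LT \<and> incomparable (union_cl LLT) LT \<and>
         class_subset LTT (bool_cl LLT) \<and> class_subset (bool_cl LLT) LTT"
proof -
  have fin01: "finite {0::nat,1}" by simp
  have fin012: "finite {0::nat,1,2}" by simp
  have LB_not_SLT: "\<not> SLT {0,1} LB" using SLT_QB LB_not_QB by blast
  have LB_not_uSLT: "\<not> union_cl SLT {0,1} LB" using ucl_SLT_QB LB_not_QB by blast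
  have LA_not_ui: "\<not> union_inter_cl LLT {0,1} LA" using ui_QA LA_not_QA by blast
  have LA_not_u: "\<not> union_cl LLT {0,1} LA" using LA_not_ui union_ui by blast
  have LA_not_LLT: "\<not> LLT {0,1} LA" using LA_not_u union_cl.base by blast
  have LB_u: "union_cl LLT {0,1} LB" by (rule union_cl.base) (rule LB_LLT)
  have s1: "strict_subclass SLT LLT"
    unfolding strict_subclass_def class_subset_def using SLT_LLT LB_LLT LB_not_SLT fin01 by blast
  have s2: "strict_subclass LLT (union_cl LLT)"
    unfolding strict_subclass_def class_subset_def using union_cl.base LC_union LC_not_LLT fin012 by blast
  have s3: "class_subset (union_cl LLT) (union_inter_cl LLT)"
    unfolding class_subset_def using union_ui by blast
  have s4: "strict_subclass (union_inter_cl LLT) LTT"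
    unfolding strict_subclass_def class_subset_def using ui_LTT LA_LTT LA_not_ui fin01 by blast
  have s5: "strict_subclass (union_cl SLT) (union_cl LLT)"
    unfolding strict_subclass_def class_subset_def
    using union_mono[of SLT _ LLT] SLT_LLT LB_u LB_not_uSLT fin01 by blast
  have s6: "incomparable LLT LT"
    unfolding incomparable_def class_subset_def using LB_LLT LB_not_LT LA_LT LA_not_LLT fin01 by blast
  have s7: "incomparable (union_cl LLT) LT"
    unfolding incomparable_def class_subset_def using LB_u LB_not_LT LA_LT LA_not_u fin01 by blast
  have s8: "class_subset LTT (bool_cl LLT)" unfolding class_subset_def using LTT_bool by blast
  have s9: "class_subset (bool_cl LLT) LTT" unfolding class_subset_def using bool_LTT by blast
  show ?thesis using s1 s2 s3 s4 s5 s6 s7 s8 s9 by blast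
qed

end
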